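(* Let $m\ge1$ be an integer, let $\tilde H\in\Omega_{4n}$ be invertible and Hermitian, and let $\tilde B\in\Omega_{4n}$ be $\tilde H$-selfadjoint with $\sigma(\tilde B)\cap\mathbb{R}=\emptyset$. Then there exists an $\tilde H$-selfadjoint $\tilde A\in\Omega_{4n}$ such that $\tilde A^m=\tilde B$.
   Context: $\Omega_{2k}=\{\begin{bmatrix}A_1&\bar A_2\\-A_2&\bar A_1\end{bmatrix}: A_1,A_2\in\mathbb{C}^{k\times k}\}\subset\mathbb{C}^{2k\times 2k}$. For an invertible Hermitian $H$, $A$ is $H$-selfadjoint if $HA=A^*H$. $\sigma(\cdot)$ denotes the spectrum. *)

theory Defs
  imports "Jordan_Normal_Form.Schur_Decomposition" "Jordan_Normal_Form.Spectral_Radius"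
begin

text \<open>Omega k is the set of 2k x 2k complex matrices of block form
  [[A1, conj A2], [-A2, conj A1]] with A1, A2 complex k x k matrices.\<close>
definition Omega :: "nat \<Rightarrow> complex mat set" where
  "Omega k = {M. M \<in> carrier_mat (2*k) (2*k) \<and>
     (\<forall>i<k. \<forall>j<k. M $$ (k+i, k+j) = cnj (M $$ (i, j)) \<and>
                   M $$ (k+i, j) = - cnj (M $$ (i, k+j)))}"

definition hermitian_mat :: "complex mat \<Rightarrow> bool" where
  "hermitian_mat H \<longleftrightarrow> H \<in> carrier_mat (dim_row H) (dim_row H) \<and> mat_adjoint H = H"

definition H_selfadjoint :: "complex mat \<Rightarrow> complex mat \<Rightarrow> bool" where
  "H_selfadjoint H A \<longleftrightarrow> H * A = mat_adjoint A * H"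

end

theory Submission
  imports Defs "HOL-Computational_Algebra.Field_as_Ring"
begin

interpretation cnj_hom: comm_ring_hom cnj by unfold_locales auto
interpretation cp_hom: map_poly_comm_ring_hom cnj ..

abbreviation cp :: "complex poly \<Rightarrow> complex poly" where "cp \<equiv> map_poly cnj"

lemma cp_cp[simp]: "cp (cp p) = p"
  by (simp add: map_poly_map_poly o_def)

lemma cp_smult[simp]: "cp (Polynomial.smult c p) = Polynomial.smult (cnj c) (cp p)"
  by (rule poly_eqI) (simp add: coeff_map_poly)

lemma binom_aux:
  fixes a b :: "'a::comm_ring_1"
  assumes "m \<ge> 1"
  shows "\<exists>t. (a+b)^m = a^m + of_nat m * a^(m-1) * b + b^2 * t"
  using assms
proof (induction m rule: dec_induct)
  case base
  then show ?case by (intro exI[of _ 0]) simp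
next
  case (step k)
  then obtain t where t: "(a+b)^k = a^k + of_nat k * a^(k-1) * b + b^2 * t" by blast
  have ak: "a * a^(k-1) = a^k" using step(1)
    by (metis Suc_diff_le diff_Suc_1 power_Suc)
  have "(a+b)^Suc k = (a+b) * (a^k + of_nat k * a^(k-1) * b + b^2 * t)" using t by simp
  also have "\<dots> = a^Suc k + of_nat (Suc k) * a^(Suc k - 1) * b
      + b^2 * (of_nat k * a^(k-1) + t * (a+b))"
    using ak by (simp add: algebra_simps power2_eq_square)
  finally show ?case by blast
qed

lemma hensel_step:
  fixes P q :: "complex poly"
  assumes cpP: "cp P = P" and cpq: "cp q = q" and cop: "coprime [:0,1:] P"
    and dv: "P^j dvd q^m - [:0,1:]" and j: "j \<ge> 1" and m: "m \<ge> 1"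
  shows "\<exists>q'. cp q' = q' \<and> P^(Suc j) dvd q'^m - [:0,1:]"
proof -
  let ?X = "[:0,1:] :: complex poly"
  have cpX: "cp ?X = ?X" by simp
  obtain r where r: "q^m - ?X = P^j * r" using dv by (elim dvdE)
  have P0: "P \<noteq> 0"
  proof
    assume "P = 0"
    with cop have "is_unit ?X" by simp
    then show False by (simp add: is_unit_poly_iff)
  qed
  have "P^j * cp r = cp (P^j * r)" using cpP by (simp add: cp_hom.hom_mult cp_hom.hom_power)
  also have "\<dots> = P^j * r" using r[symmetric] cpq cpX by (simp add: cp_hom.hom_minus cp_hom.hom_power)
  finally have cpr: "cp r = r" using P0 by simp
  have "P dvd P^j" using j by (cases j) auto
  then have Pdv: "P dvd q^m - ?X" using dv by (rule dvd_trans)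
  have copq: "coprime q P"
  proof (rule coprimeI)
    fix c assume c1: "c dvd q" and c2: "c dvd P"
    have "q dvd q^m" using m by (cases m) auto
    then have "c dvd q^m" using c1 by (meson dvd_trans)
    moreover have "c dvd q^m - ?X" using c2 Pdv dvd_trans by blast
    ultimately have "c dvd q^m - (q^m - ?X)" by (rule dvd_diff)
    then have "c dvd ?X" by simp
    then show "is_unit c" using cop c2 coprime_common_divisor by blast
  qed
  define D where "D = (of_nat m :: complex poly) * q^(m-1)"
  have unit_m: "is_unit (of_nat m :: complex poly)" using m
    by (simp add: is_unit_poly_iff of_nat_poly)
  have c1: "coprime (of_nat m :: complex poly) P" using unit_m by (rule is_unit_left_imp_coprime)
  have c2: "coprime (q^(m-1)) P"
  proof (cases "m-1")
    case 0 then show ?thesis by simp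
  next
    case (Suc k) then show ?thesis using copq coprime_power_left_iff[of q "Suc k" P] by simp
  qed
  have copD: "coprime D P" unfolding D_def using c1 c2 by simp
  obtain u v where uv: "u * D + v * P = 1"
    using bezout_coefficients_fst_snd[of D P] copD by (metis coprime_iff_gcd_eq_1)
  have cpD: "cp D = D" unfolding D_def using cpq by (simp only: cp_hom.hom_mult cp_hom.hom_power cp_hom.hom_of_nat)
  define s where "s = - (u * r)"
  define s' where "s' = Polynomial.smult (1/2) (s + cp s)"
  have cps': "cp s' = s'" unfolding s'_def by (simp add: cp_hom.hom_add add.commute)
  have uD: "u * D = 1 - v * P" using uv by (simp add: eq_diff_eq)
  have e1: "r + D * s = v * P * r"
  proof -
    have "r + D * s = r - (u * D) * r" by (simp add: s_def algebra_simps)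
    also have "\<dots> = v * P * r" unfolding uD by (simp add: algebra_simps)
    finally show ?thesis .
  qed
  have e2: "r + D * cp s = cp v * P * r"
  proof -
    have "cp (r + D * s) = r + D * cp s" using cpr cpD by (simp add: cp_hom.hom_mult cp_hom.hom_add)
    moreover have "cp (v * P * r) = cp v * P * r" using cpr cpP by (simp add: cp_hom.hom_mult)
    ultimately show ?thesis using e1 by simp
  qed
  have Ds': "D * s' = Polynomial.smult (1/2) (D * s) + Polynomial.smult (1/2) (D * cp s)"
    by (simp add: s'_def mult_smult_right smult_add_right distrib_left)
  have "r + D * s' = Polynomial.smult (1/2) ((r + D * s) + (r + D * cp s))"
    unfolding Ds'
  proof (rule poly_eqI)
    fix n
    have two: "coeff (r*2) n = 2 * coeff r n" by (metis coeff_add mult_2_right mult_2)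
    show "coeff (r + (Polynomial.smult (1/2) (D * s) + Polynomial.smult (1/2) (D * cp s))) n =
      coeff (Polynomial.smult (1/2) ((r + D * s) + (r + D * cp s))) n"
      using two by (simp add: field_simps)
  qed
  also have "\<dots> = Polynomial.smult (1/2) (P * ((v + cp v) * r))" unfolding e1 e2 by (simp add: algebra_simps)
  finally have PD: "P dvd r + D * s'" by (simp add: dvd_smult)
  define q' where "q' = q + P^j * s'"
  have cpq': "cp q' = q'" unfolding q'_def using cpq cpP cps' by (simp add: cp_hom.hom_mult cp_hom.hom_add cp_hom.hom_power)
  obtain t where t: "q'^m = q^m + of_nat m * q^(m-1) * (P^j * s') + (P^j * s')^2 * t"
    using binom_aux[OF m, of q "P^j * s'"] unfolding q'_def by blast
  have "q'^m - ?X = P^j * (r + D * s') + P^(2*j) * (s'^2 * t)"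
    unfolding t D_def using r by (simp add: algebra_simps power_mult_distrib power_mult[symmetric] mult.commute)
  moreover have "P^(Suc j) dvd P^j * (r + D * s')" using PD by (simp add: mult_dvd_mono mult.commute)
  moreover have "P^(Suc j) dvd P^(2*j) * (s'^2 * t)" using j
    by (intro dvd_mult2 le_imp_power_dvd) simp
  ultimately have "P^(Suc j) dvd q'^m - ?X" by simp
  with cpq' show ?thesis by blast
qed

lemma hensel_iter:
  fixes P q0 :: "complex poly"
  assumes cpP: "cp P = P" and cpq: "cp q0 = q0" and cop: "coprime [:0,1:] P"
    and dv: "P dvd q0^m - [:0,1:]" and m: "m \<ge> 1" and j: "j \<ge> 1"
  shows "\<exists>q. cp q = q \<and> P^j dvd q^m - [:0,1:]"
  using j
proof (induction j rule: dec_induct)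
  case base then show ?case using cpq dv by auto
next
  case (step k)
  then obtain q where "cp q = q" "P^k dvd q^m - [:0,1:]" by blast
  from hensel_step[OF cpP this(1) cop this(2) step(1) m] show ?case by blast
qed

lemma interp:
  fixes v :: "complex \<Rightarrow> complex"
  assumes "finite S"
  shows "\<exists>q. \<forall>s\<in>S. poly q s = v s"
  using assms
proof (induction S rule: finite_induct)
  case empty then show ?case by auto
next
  case (insert a S)
  then obtain q where q: "\<forall>s\<in>S. poly q s = v s" by blast
  define W where "W = (\<Prod>s\<in>S. [:-s, 1:])"
  have Wa: "poly W a \<noteq> 0" unfolding W_def using insert(1,2) by (auto simp: poly_prod)
  have Ws: "\<forall>s\<in>S. poly W s = 0" unfolding W_def using insert(1) by (auto simp: poly_prod)
  define q' where "q' = q + Polynomial.smult ((v a - poly q a) / poly W a) W"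
  have "\<forall>s\<in>insert a S. poly q' s = v s" unfolding q'_def using q Ws Wa by auto
  then show ?case by blast
qed

lemma lin_prod_dvd:
  fixes f :: "complex poly"
  assumes "finite S" and "\<forall>s\<in>S. poly f s = 0"
  shows "(\<Prod>s\<in>S. [:-s, 1:]) dvd f"
  using assms
proof (induction S arbitrary: f rule: finite_induct)
  case empty then show ?case by simp
next
  case (insert a S)
  then have "poly f a = 0" by simp
  then obtain g where g: "f = [:-a,1:] * g" using poly_eq_0_iff_dvd by (metis dvdE)
  have "\<forall>s\<in>S. poly g s = 0"
  proof
    fix s assume s: "s \<in> S"
    then have "s \<noteq> a" using insert(2) by auto
    moreover have "poly f s = 0" using insert(4) s by auto
    ultimately show "poly g s = 0" unfolding g by simp
  qed
  then have "(\<Prod>s\<in>S. [:-s, 1:]) dvd g" using insert(3) by blast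
  then have "[:-a,1:] * (\<Prod>s\<in>S. [:-s, 1:]) dvd [:-a,1:] * g" by (rule mult_dvd_mono[OF dvd_refl])
  then show ?case unfolding g prod.insert[OF insert(1,2)] .
qed

lemma list_prod_dvd_pow:
  fixes S :: "complex set"
  assumes "finite S" and "set as \<subseteq> S"
  shows "(\<Prod>a\<leftarrow>as. [:-a, 1:]) dvd (\<Prod>s\<in>S. [:-s, 1:])^(length as)"
  using assms(2)
proof (induction as)
  case Nil then show ?case by simp
next
  case (Cons a as)
  have "poly (\<Prod>s\<in>S. [:-s, 1:]) a = 0" using Cons(2) assms(1) by (auto simp: poly_prod)
  then have "[:-a,1:] dvd (\<Prod>s\<in>S. [:-s, 1:])" using poly_eq_0_iff_dvd by blast
  moreover have "(\<Prod>a\<leftarrow>as. [:-a, 1:]) dvd (\<Prod>s\<in>S. [:-s, 1:])^(length as)"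
    using Cons by simp
  ultimately have "[:-a,1:] * (\<Prod>a\<leftarrow>as. [:-a, 1:]) dvd (\<Prod>s\<in>S. [:-s, 1:]) * (\<Prod>s\<in>S. [:-s, 1:])^(length as)"
    by (rule mult_dvd_mono)
  then show ?case by (simp only: list.map prod_list.Cons length_Cons power_Suc)
qed

definition rho :: "nat \<Rightarrow> complex \<Rightarrow> complex" where
  "rho m z = rcis (root m (cmod z)) (Arg z / real m)"

definition rt :: "nat \<Rightarrow> complex \<Rightarrow> complex" where
  "rt m z = (if 0 < Im z then rho m z else cnj (rho m (cnj z)))"

lemma rho_pow: assumes "m \<ge> 1" shows "rho m z ^ m = z"
proof -
  have "rho m z ^ m = rcis (root m (cmod z) ^ m) (real m * (Arg z / real m))"
    unfolding rho_def by (rule DeMoivre2)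
  also have "\<dots> = rcis (cmod z) (Arg z)" using assms by (simp add: real_root_pow_pos2)
  also have "\<dots> = z" by (rule rcis_cmod_Arg)
  finally show ?thesis .
qed

lemma rt_pow: assumes "m \<ge> 1" shows "rt m z ^ m = z"
  unfolding rt_def using rho_pow[OF assms] by (auto simp flip: complex_cnj_power)

lemma rt_cnj: assumes "Im z \<noteq> 0" shows "rt m (cnj z) = cnj (rt m z)"
  unfolding rt_def using assms by auto

lemma coprime_X:
  fixes P :: "complex poly"
  assumes "P \<noteq> 0" and "poly P 0 \<noteq> 0"
  shows "coprime [:0,1:] P"
proof (rule coprimeI)
  fix c assume c1: "c dvd [:0,1:]" and c2: "c dvd P"
  show "is_unit c"
  proof (rule ccontr)
    assume nu: "\<not> is_unit c"
    have "c \<noteq> 0" using c2 assms(1) by auto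
    with nu have "degree c \<noteq> 0" by (simp add: is_unit_iff_degree)
    then have "\<not> constant (poly c)" by (simp add: constant_degree)
    then obtain z where z: "poly c z = 0" using fundamental_theorem_of_algebra by blast
    have "poly [:0,1:] z = 0" using c1 z by (metis dvdE mult_eq_0_iff poly_mult)
    then have "z = 0" by simp
    moreover have "poly P z = 0" using c2 z by (metis dvdE mult_eq_0_iff poly_mult)
    ultimately show False using assms(2) by simp
  qed
qed

lemma poly_part:
  fixes S :: "complex set"
  assumes fin: "finite S" and cS: "cnj ` S = S" and nr: "\<forall>s\<in>S. Im s \<noteq> 0"
    and m: "m \<ge> 1" and j: "j \<ge> 1"
  shows "\<exists>q. cp q = q \<and> (\<Prod>s\<in>S. [:-s, 1:])^j dvd q^m - [:0,1:]"
proof -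
  define P where "P = (\<Prod>s\<in>S. [:-s, 1:])"
  obtain q where q: "\<forall>s\<in>S. poly q s = rt m s" using interp[OF fin] by blast
  define q0 where "q0 = Polynomial.smult (1/2) (q + cp q)"
  have cpq0: "cp q0 = q0" unfolding q0_def by (simp add: cp_hom.hom_add add.commute)
  have q0s: "poly q0 s = rt m s" if s: "s \<in> S" for s
  proof -
    have "cnj s \<in> S" using cS s by auto
    then have "poly (cp q) s = rt m s" using q nr s by (simp add: poly_map_poly_cnj rt_cnj)
    then show ?thesis unfolding q0_def using q s by simp
  qed
  have "\<forall>s\<in>S. poly (q0^m - [:0,1:]) s = 0" using q0s rt_pow[OF m] by simp
  then have Pdv: "P dvd q0^m - [:0,1:]" unfolding P_def by (rule lin_prod_dvd[OF fin])
  have "cp P = (\<Prod>s\<in>S. [:-cnj s, 1:])" unfolding P_def by (simp add: cp_hom.hom_prod)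
  also have "\<dots> = (\<Prod>s\<in>cnj ` S. [:-s, 1:])" by (simp add: prod.reindex inj_on_def)
  finally have cpP: "cp P = P" unfolding P_def cS .
  have P0: "P \<noteq> 0" unfolding P_def using fin by simp
  have "poly P 0 \<noteq> 0" unfolding P_def using fin nr by (auto simp: poly_prod)
  then have cop: "coprime [:0,1:] P" using coprime_X P0 by blast
  show ?thesis using hensel_iter[OF cpP cpq0 cop Pdv m j] unfolding P_def .
qed



fun hornm :: "complex mat \<Rightarrow> nat \<Rightarrow> complex list \<Rightarrow> complex mat" where
  "hornm A n [] = 0\<^sub>m n n"
| "hornm A n (c # cs) = c \<cdot>\<^sub>m 1\<^sub>m n + A * hornm A n cs"

definition evalm :: "complex mat \<Rightarrow> complex poly \<Rightarrow> complex mat" where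
  "evalm A p = hornm A (dim_row A) (coeffs p)"

lemma hornm_carrier: "A \<in> carrier_mat n n \<Longrightarrow> hornm A n cs \<in> carrier_mat n n"
  by (induction cs) auto

lemma hornm_cCons: assumes "A \<in> carrier_mat n n"
  shows "hornm A n (cCons a cs) = hornm A n (a # cs)"
  using assms by (auto simp: cCons_def)

lemma evalm_carrier[simp]: assumes "A \<in> carrier_mat n n" shows "evalm A p \<in> carrier_mat n n"
proof -
  have "dim_row A = n" using assms by (rule carrier_matD)
  then show ?thesis unfolding evalm_def using hornm_carrier[OF assms] by simp
qed

lemma evalm_dims[simp]: assumes "A \<in> carrier_mat n n"
  shows "dim_row (evalm A p) = n" "dim_col (evalm A p) = n"
  using carrier_matD[OF evalm_carrier[OF assms]] by blast+

lemma smult_one_mat[simp]: "(1::complex) \<cdot>\<^sub>m M = M"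
  by (rule eq_matI) auto

lemma zero_smult_add[simp]: "M \<in> carrier_mat n n \<Longrightarrow> (0::complex) \<cdot>\<^sub>m 1\<^sub>m n + M = M"
  by (rule eq_matI) auto

lemma add4_mat: "X \<in> carrier_mat n n \<Longrightarrow> Y \<in> carrier_mat n n \<Longrightarrow>
  ((a::complex) + b) \<cdot>\<^sub>m 1\<^sub>m n + (X + Y) = (a \<cdot>\<^sub>m 1\<^sub>m n + X) + (b \<cdot>\<^sub>m 1\<^sub>m n + Y)"
  by (rule eq_matI) (auto simp: distrib_right)

lemma smult2_mat: "X \<in> carrier_mat n n \<Longrightarrow>
  (c::complex) \<cdot>\<^sub>m (a \<cdot>\<^sub>m 1\<^sub>m n + X) = (c * a) \<cdot>\<^sub>m 1\<^sub>m n + c \<cdot>\<^sub>m X"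
  by (rule eq_matI) (auto simp: distrib_left)

lemma evalm_0[simp]: "A \<in> carrier_mat n n \<Longrightarrow> evalm A 0 = 0\<^sub>m n n"
  unfolding evalm_def by auto

lemma evalm_pCons: assumes A: "A \<in> carrier_mat n n"
  shows "evalm A (pCons a p) = a \<cdot>\<^sub>m 1\<^sub>m n + A * evalm A p"
  unfolding evalm_def coeffs_pCons_eq_cCons using A hornm_cCons[OF A] by auto

lemma evalm_add: assumes A: "A \<in> carrier_mat n n"
  shows "evalm A (p + q) = evalm A p + evalm A q"
proof (induction p arbitrary: q rule: pCons_induct)
  case 0 then show ?case using A by simp
next
  case (pCons a p)
  obtain b q' where q: "q = pCons b q'" by (cases q)
  have E1: "evalm A p \<in> carrier_mat n n" "evalm A q' \<in> carrier_mat n n" using A by auto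
  have "evalm A (pCons a p + q) = (a + b) \<cdot>\<^sub>m 1\<^sub>m n + (A * evalm A p + A * evalm A q')"
    unfolding q add_pCons evalm_pCons[OF A] pCons(2) using mult_add_distrib_mat[OF A E1] by simp
  also have "\<dots> = evalm A (pCons a p) + evalm A q"
    unfolding q evalm_pCons[OF A] using A E1
    by (intro add4_mat) auto
  finally show ?case .
qed

lemma evalm_smult: assumes A: "A \<in> carrier_mat n n"
  shows "evalm A (Polynomial.smult c p) = c \<cdot>\<^sub>m evalm A p"
proof (induction p rule: pCons_induct)
  case 0 then show ?case using A by simp
next
  case (pCons a p)
  have E1: "evalm A p \<in> carrier_mat n n" using A by auto
  show ?case unfolding smult_pCons evalm_pCons[OF A] pCons(2) mult_smult_distrib[OF A E1]
    using A E1 by (intro smult2_mat[symmetric]) auto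
qed

lemma evalm_mult: assumes A: "A \<in> carrier_mat n n"
  shows "evalm A (p * q) = evalm A p * evalm A q"
proof (induction p rule: pCons_induct)
  case 0 then show ?case using A by simp
next
  case (pCons a p)
  have E1: "evalm A p \<in> carrier_mat n n" "evalm A q \<in> carrier_mat n n" using A by auto
  have "evalm A (pCons a p * q) = a \<cdot>\<^sub>m evalm A q + A * (evalm A p * evalm A q)"
    unfolding mult_pCons_left evalm_add[OF A] evalm_smult[OF A] evalm_pCons[OF A] pCons(2)
    using A E1 zero_smult_add[OF mult_carrier_mat[OF A mult_carrier_mat[OF E1]]] by simp
  also have "\<dots> = (a \<cdot>\<^sub>m 1\<^sub>m n + A * evalm A p) * evalm A q"
  proof -
    have s1: "a \<cdot>\<^sub>m 1\<^sub>m n \<in> carrier_mat n n" by simp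
    have s2: "A * evalm A p \<in> carrier_mat n n" using A E1 by simp
    have "(a \<cdot>\<^sub>m 1\<^sub>m n + A * evalm A p) * evalm A q
        = (a \<cdot>\<^sub>m 1\<^sub>m n) * evalm A q + (A * evalm A p) * evalm A q"
      by (rule add_mult_distrib_mat[OF s1 s2 E1(2)])
    also have "(a \<cdot>\<^sub>m 1\<^sub>m n) * evalm A q = a \<cdot>\<^sub>m evalm A q"
      using mult_smult_assoc_mat[OF one_carrier_mat E1(2)] E1 by simp
    also have "(A * evalm A p) * evalm A q = A * (evalm A p * evalm A q)"
      by (rule assoc_mult_mat[OF A E1(1) E1(2)])
    finally show ?thesis by simp
  qed
  finally show ?case unfolding evalm_pCons[OF A] .
qed

lemma evalm_const: assumes A: "A \<in> carrier_mat n n" shows "evalm A [:c:] = c \<cdot>\<^sub>m 1\<^sub>m n"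
  using evalm_pCons[OF A, of c 0] A by simp

lemma evalm_X: assumes A: "A \<in> carrier_mat n n" shows "evalm A [:0,1:] = A"
  using evalm_pCons[OF A, of 0 "[:1:]"] evalm_const[OF A, of 1] A by simp

lemma evalm_lin: assumes A: "A \<in> carrier_mat n n" shows "evalm A [:c,1:] = c \<cdot>\<^sub>m 1\<^sub>m n + A"
  using evalm_pCons[OF A, of c "[:1:]"] evalm_const[OF A, of 1] A by simp

lemma evalm_power: assumes A: "A \<in> carrier_mat n n" shows "evalm A (p ^ k) = evalm A p ^\<^sub>m k"
proof (induction k)
  case 0 then show ?case using evalm_const[OF A, of 1] A by (simp add: one_pCons)
next
  case (Suc k) then show ?case by (simp only: power_Suc2 evalm_mult[OF A] pow_mat.simps)
qed

lemma evalm_comm: assumes A: "A \<in> carrier_mat n n" shows "A * evalm A p = evalm A p * A"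
proof -
  have "A * evalm A p = evalm A ([:0,1:] * p)" using evalm_mult[OF A] evalm_X[OF A] by (simp only:)
  also have "\<dots> = evalm A (p * [:0,1:])" by (simp only: mult.commute)
  also have "\<dots> = evalm A p * A" using evalm_mult[OF A] evalm_X[OF A] by (simp only:)
  finally show ?thesis .
qed


lemma evalm_sim:
  assumes T: "T \<in> carrier_mat n n" and P: "P \<in> carrier_mat n n" and Q: "Q \<in> carrier_mat n n"
    and PQ: "P * Q = 1\<^sub>m n" and QP: "Q * P = 1\<^sub>m n"
  shows "evalm (P * T * Q) p = P * evalm T p * Q"
proof (induction p rule: pCons_induct)
  case 0 then show ?case using T P Q by simp
next
  case (pCons a p)
  have A: "P * T * Q \<in> carrier_mat n n" using T P Q by simp
  have E: "evalm T p \<in> carrier_mat n n" using T by simp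
  have "evalm (P * T * Q) (pCons a p) = a \<cdot>\<^sub>m 1\<^sub>m n + P * T * Q * (P * evalm T p * Q)"
    unfolding evalm_pCons[OF A] pCons(2) ..
  also have "P * T * Q * (P * evalm T p * Q) = P * (T * evalm T p) * Q"
  proof -
    have "P * T * Q * (P * evalm T p * Q) = P * T * (Q * P) * evalm T p * Q"
      using T P Q E by (simp add: assoc_mult_mat[of _ n n _ n _ n] mult_carrier_mat[of _ n n _ n])
    also have "\<dots> = P * (T * evalm T p) * Q" using T P Q E QP by (simp add: assoc_mult_mat[of _ n n _ n _ n] mult_carrier_mat[of _ n n _ n])
    finally show ?thesis .
  qed
  also have "a \<cdot>\<^sub>m 1\<^sub>m n = P * (a \<cdot>\<^sub>m 1\<^sub>m n) * Q"
    using P Q PQ by (simp add: mult_smult_distrib[of _ n n _ n] mult_smult_assoc_mat[of _ n n _ n])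
  also have "P * (a \<cdot>\<^sub>m 1\<^sub>m n) * Q + P * (T * evalm T p) * Q = P * (a \<cdot>\<^sub>m 1\<^sub>m n + T * evalm T p) * Q"
  proof -
    have c1: "a \<cdot>\<^sub>m 1\<^sub>m n \<in> carrier_mat n n" by simp
    have c2: "T * evalm T p \<in> carrier_mat n n" using T E by simp
    have "P * (a \<cdot>\<^sub>m 1\<^sub>m n + T * evalm T p) = P * (a \<cdot>\<^sub>m 1\<^sub>m n) + P * (T * evalm T p)"
      by (rule mult_add_distrib_mat[OF P c1 c2])
    moreover have "(P * (a \<cdot>\<^sub>m 1\<^sub>m n) + P * (T * evalm T p)) * Q = P * (a \<cdot>\<^sub>m 1\<^sub>m n) * Q + P * (T * evalm T p) * Q"
      by (rule add_mult_distrib_mat[OF mult_carrier_mat[OF P c1] mult_carrier_mat[OF P c2] Q])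
    ultimately show ?thesis by simp
  qed
  finally show ?case unfolding evalm_pCons[OF T] .
qed

lemma tri_kill:
  assumes T: "T \<in> carrier_mat n n" and ut: "upper_triangular T" and dg: "diag_mat T = es"
  shows "evalm T (\<Prod>a\<leftarrow>es. [:-a, 1:]) = 0\<^sub>m n n"
proof -
  have len: "length es = n" using dg T unfolding diag_mat_def by auto
  have es_nth: "es ! i = T $$ (i,i)" if "i < n" for i using dg T that unfolding diag_mat_def by auto
  have main: "\<forall>r<n. \<forall>c<k. evalm T (\<Prod>a\<leftarrow>take k es. [:-a, 1:]) $$ (r,c) = 0" if "k \<le> n" for k
    using that
  proof (induction k)
    case 0 then show ?case by simp
  next
    case (Suc k)
    then have kn: "k < n" by simp
    define M where "M = evalm T (\<Prod>a\<leftarrow>take k es. [:-a, 1:])"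
    define N where "N = (- (es ! k)) \<cdot>\<^sub>m 1\<^sub>m n + T"
    have M: "M \<in> carrier_mat n n" unfolding M_def using T by simp
    have N: "N \<in> carrier_mat n n" unfolding N_def using T by simp
    have IH: "\<forall>r<n. \<forall>c<k. M $$ (r,c) = 0" using Suc unfolding M_def by simp
    have "take (Suc k) es = take k es @ [es ! k]" using kn len by (simp add: take_Suc_conv_app_nth)
    then have "(\<Prod>a\<leftarrow>take (Suc k) es. [:-a, 1:]) = (\<Prod>a\<leftarrow>take k es. [:-a, 1:]) * [:-(es!k), 1:]"
      by simp
    then have "evalm T (\<Prod>a\<leftarrow>take (Suc k) es. [:-a, 1:]) = M * N"
      unfolding M_def N_def by (simp only: evalm_mult[OF T] evalm_lin[OF T])
    moreover have "(M * N) $$ (r,c) = 0" if r: "r < n" and c: "c < Suc k" for r c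
    proof -
      have cn: "c < n" using c kn by simp
      have "(M * N) $$ (r,c) = (\<Sum>l\<in>{0..<n}. M $$ (r,l) * N $$ (l,c))"
        using M N r cn by (simp add: scalar_prod_def)
      also have "\<dots> = 0"
      proof (rule sum.neutral, rule ballI)
        fix l assume l: "l \<in> {0..<n}"
        show "M $$ (r,l) * N $$ (l,c) = 0"
        proof (cases "l < k")
          case True then show ?thesis using IH r by simp
        next
          case False
          show ?thesis
          proof (cases "l = c")
            case True
            with False c have "l = k" by simp
            then have "N $$ (l,c) = 0" using True kn es_nth[OF kn] T unfolding N_def by simp
            then show ?thesis by simp
          next
            case ne: False
            with False c have "c < l" by simp
            then have "T $$ (l,c) = 0" using ut l T by (auto simp: upper_triangular_def)
            then have "N $$ (l,c) = 0" using ne l cn T unfolding N_def by simp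
            then show ?thesis by simp
          qed
        qed
      qed
      finally show ?thesis .
    qed
    ultimately show ?case by simp
  qed
  have "evalm T (\<Prod>a\<leftarrow>es. [:-a, 1:]) = evalm T (\<Prod>a\<leftarrow>take n es. [:-a, 1:])" using len by simp
  also have "\<dots> = 0\<^sub>m n n"
    using main[of n] T by (intro eq_matI) auto
  finally show ?thesis .
qed



lemma adj_dims[simp]: fixes A :: "complex mat" shows "dim_row (mat_adjoint A) = dim_col A" "dim_col (mat_adjoint A) = dim_row A"
  unfolding mat_adjoint_def mat_of_rows_def by auto

lemma adj_index[simp]: fixes A :: "complex mat" shows "i < dim_col A \<Longrightarrow> j < dim_row A \<Longrightarrow> mat_adjoint A $$ (i,j) = cnj (A $$ (j,i))"
  unfolding mat_adjoint_def by (simp add: mat_of_rows_index)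

lemma adj_carrier[simp]: fixes A :: "complex mat" shows "A \<in> carrier_mat n m \<Longrightarrow> mat_adjoint A \<in> carrier_mat m n"
  unfolding carrier_mat_def by simp

lemma adj_mult: fixes A B :: "complex mat" assumes A: "A \<in> carrier_mat n k" and B: "B \<in> carrier_mat k l"
  shows "mat_adjoint (A * B) = mat_adjoint B * mat_adjoint A"
proof (rule eq_matI)
  fix i j assume i: "i < dim_row (mat_adjoint B * mat_adjoint A)" and j: "j < dim_col (mat_adjoint B * mat_adjoint A)"
  then have i': "i < l" and j': "j < n" using A B by auto
  show "mat_adjoint (A * B) $$ (i, j) = (mat_adjoint B * mat_adjoint A) $$ (i, j)"
    using A B i' j' by (simp add: scalar_prod_def mult.commute)
qed (use A B in auto)

lemma adj_add: fixes A B :: "complex mat" assumes A: "A \<in> carrier_mat n m" and B: "B \<in> carrier_mat n m"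
  shows "mat_adjoint (A + B) = mat_adjoint A + mat_adjoint B"
  by (rule eq_matI) (use A B in auto)

lemma adj_smult: fixes A :: "complex mat" shows "mat_adjoint (c \<cdot>\<^sub>m A) = cnj c \<cdot>\<^sub>m mat_adjoint A"
  by (rule eq_matI) auto

lemma adj_one: "mat_adjoint (1\<^sub>m n :: complex mat) = 1\<^sub>m n"
  by (rule eq_matI) auto

lemma sum_split2: fixes k :: nat shows "(\<Sum>l\<in>{0..<2*k}. f l) = (\<Sum>l\<in>{0..<k}. f l + f (k+l))"
proof -
  have "{0..<2*k} = {0..<k} \<union> {k..<k+k}" by auto
  then have "(\<Sum>l\<in>{0..<2*k}. f l) = (\<Sum>l\<in>{0..<k}. f l) + (\<Sum>l\<in>{k..<k+k}. f l)"
    by (simp add: sum.union_disjoint)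
  also have "(\<Sum>l\<in>{k..<k+k}. f l) = (\<Sum>l\<in>{0..<k}. f (k+l))"
    using sum.shift_bounds_nat_ivl[of f 0 k k] by (simp add: add.commute)
  finally show ?thesis by (simp add: sum.distrib)
qed

lemma OmegaD: assumes "M \<in> Omega k" "i < k" "j < k"
  shows "M $$ (k+i, k+j) = cnj (M $$ (i, j))" "M $$ (k+i, j) = - cnj (M $$ (i, k+j))"
    "M $$ (i, k+j) = - cnj (M $$ (k+i, j))" "M \<in> carrier_mat (2*k) (2*k)"
proof -
  show 1: "M $$ (k+i, k+j) = cnj (M $$ (i, j))" "M $$ (k+i, j) = - cnj (M $$ (i, k+j))"
    "M \<in> carrier_mat (2*k) (2*k)" using assms unfolding Omega_def by auto
  from 1(2) have "cnj (M $$ (k+i, j)) = - M $$ (i, k+j)" by simp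
  then show "M $$ (i, k+j) = - cnj (M $$ (k+i, j))" by simp
qed

lemma Omega_carrier: "M \<in> Omega k \<Longrightarrow> M \<in> carrier_mat (2*k) (2*k)"
  unfolding Omega_def by auto

lemma Omega_add: "M \<in> Omega k \<Longrightarrow> N \<in> Omega k \<Longrightarrow> M + N \<in> Omega k"
  unfolding Omega_def by auto

lemma Omega_smult: "M \<in> Omega k \<Longrightarrow> cnj c = c \<Longrightarrow> c \<cdot>\<^sub>m M \<in> Omega k"
  unfolding Omega_def by (auto simp: distrib_left)

lemma Omega_one: "1\<^sub>m (2*k) \<in> Omega k"
  unfolding Omega_def by auto

lemma Omega_zero: "0\<^sub>m (2*k) (2*k) \<in> Omega k"
  unfolding Omega_def by auto

lemma Omega_mult: assumes M: "M \<in> Omega k" and N: "N \<in> Omega k"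
  shows "M * N \<in> Omega k"
proof -
  have cM: "M \<in> carrier_mat (2*k) (2*k)" and cN: "N \<in> carrier_mat (2*k) (2*k)"
    using M N Omega_carrier by auto
  have ent: "(M * N) $$ (a, b) = (\<Sum>l\<in>{0..<k}. M $$ (a,l) * N $$ (l,b) + M $$ (a,k+l) * N $$ (k+l,b))"
    if "a < 2*k" "b < 2*k" for a b
    using that cM cN by (simp add: scalar_prod_def sum_split2)
  have "(M * N) $$ (k+i, k+j) = cnj ((M * N) $$ (i, j)) \<and>
        (M * N) $$ (k+i, j) = - cnj ((M * N) $$ (i, k+j))" if i: "i < k" and j: "j < k" for i j
  proof
    have "(M * N) $$ (k+i, k+j) = (\<Sum>l\<in>{0..<k}. M $$ (k+i,l) * N $$ (l,k+j) + M $$ (k+i,k+l) * N $$ (k+l,k+j))"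
      using i j by (simp add: ent)
    also have "\<dots> = (\<Sum>l\<in>{0..<k}. cnj (M $$ (i,l) * N $$ (l,j) + M $$ (i,k+l) * N $$ (k+l,j)))"
    proof (rule sum.cong[OF refl])
      fix l assume "l \<in> {0..<k}"
      then have l: "l < k" by simp
      show "M $$ (k+i,l) * N $$ (l,k+j) + M $$ (k+i,k+l) * N $$ (k+l,k+j) =
        cnj (M $$ (i,l) * N $$ (l,j) + M $$ (i,k+l) * N $$ (k+l,j))"
        using OmegaD(1,2)[OF M i l] OmegaD(1,3)[OF N l j] by simp
    qed
    also have "\<dots> = cnj ((M * N) $$ (i, j))" using i j by (simp add: ent)
    finally show "(M * N) $$ (k+i, k+j) = cnj ((M * N) $$ (i, j))" .
  next
    have "(M * N) $$ (k+i, j) = (\<Sum>l\<in>{0..<k}. M $$ (k+i,l) * N $$ (l,j) + M $$ (k+i,k+l) * N $$ (k+l,j))"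
      using i j by (simp add: ent)
    also have "\<dots> = (\<Sum>l\<in>{0..<k}. - cnj (M $$ (i,l) * N $$ (l,k+j) + M $$ (i,k+l) * N $$ (k+l,k+j)))"
    proof (rule sum.cong[OF refl])
      fix l assume "l \<in> {0..<k}"
      then have l: "l < k" by simp
      show "M $$ (k+i,l) * N $$ (l,j) + M $$ (k+i,k+l) * N $$ (k+l,j) =
        - cnj (M $$ (i,l) * N $$ (l,k+j) + M $$ (i,k+l) * N $$ (k+l,k+j))"
        using OmegaD(1,2)[OF M i l] OmegaD(1,3)[OF N l j] by (simp add: algebra_simps)
    qed
    also have "\<dots> = - cnj ((M * N) $$ (i, k+j))" using i j by (simp add: ent sum_negf sum_subtractf)
    finally show "(M * N) $$ (k+i, j) = - cnj ((M * N) $$ (i, k+j))" .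
  qed
  moreover have "M * N \<in> carrier_mat (2*k) (2*k)" using cM cN by simp
  ultimately show ?thesis unfolding Omega_def by blast
qed


lemma adj_zero: "mat_adjoint (0\<^sub>m n n :: complex mat) = 0\<^sub>m n n"
  by (rule eq_matI) auto

lemma evalm_selfadj:
  assumes B: "B \<in> carrier_mat n n" and H: "H \<in> carrier_mat n n"
    and HB: "H * B = mat_adjoint B * H"
  shows "(\<forall>i. cnj (coeff q i) = coeff q i) \<Longrightarrow> H * evalm B q = mat_adjoint (evalm B q) * H"
proof (induction q rule: pCons_induct)
  case 0 then show ?case using B H by (simp add: adj_zero)
next
  case (pCons a p)
  have ra: "cnj a = a" using pCons(3)[rule_format, of 0] by simp
  have rp: "\<forall>i. cnj (coeff p i) = coeff p i" using pCons(3) by (metis coeff_pCons_Suc)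
  define E where "E = evalm B p"
  have E: "E \<in> carrier_mat n n" unfolding E_def using B by simp
  have IH: "H * E = mat_adjoint E * H" unfolding E_def using pCons(2) rp by simp
  define Ea where "Ea = mat_adjoint E"
  define Bs where "Bs = mat_adjoint B"
  have Ea: "Ea \<in> carrier_mat n n" unfolding Ea_def using E by simp
  have Bs: "Bs \<in> carrier_mat n n" unfolding Bs_def using B by simp
  have comm: "B * E = E * B" unfolding E_def by (rule evalm_comm[OF B])
  have comm2: "Ea * Bs = Bs * Ea"
    using arg_cong[OF comm, of mat_adjoint] unfolding Ea_def Bs_def
    using adj_mult[OF B E] adj_mult[OF E B] by simp
  have c1: "a \<cdot>\<^sub>m 1\<^sub>m n \<in> carrier_mat n n" by simp
  have c2: "B * E \<in> carrier_mat n n" using B E by simp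
  have "H * (a \<cdot>\<^sub>m 1\<^sub>m n + B * E) = H * (a \<cdot>\<^sub>m 1\<^sub>m n) + H * (B * E)"
    by (rule mult_add_distrib_mat[OF H c1 c2])
  also have "H * (a \<cdot>\<^sub>m 1\<^sub>m n) = a \<cdot>\<^sub>m H" using H by (simp add: mult_smult_distrib[OF H one_carrier_mat])
  also have "H * (B * E) = (H * B) * E" using H B E by (simp add: assoc_mult_mat[OF H B E])
  also have "\<dots> = Bs * (Ea * H)" unfolding HB Bs_def[symmetric] using Bs H E IH
    by (simp add: assoc_mult_mat[OF Bs H E] Ea_def)
  finally have L: "H * (a \<cdot>\<^sub>m 1\<^sub>m n + B * E) = a \<cdot>\<^sub>m H + Bs * (Ea * H)" .
  have "mat_adjoint (a \<cdot>\<^sub>m 1\<^sub>m n + B * E) = a \<cdot>\<^sub>m 1\<^sub>m n + Ea * Bs"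
    using adj_add[OF c1 c2] adj_mult[OF B E] adj_smult[of a "1\<^sub>m n"] adj_one[of n] ra
    unfolding Ea_def Bs_def by simp
  then have "mat_adjoint (a \<cdot>\<^sub>m 1\<^sub>m n + B * E) * H = (a \<cdot>\<^sub>m 1\<^sub>m n + Bs * Ea) * H"
    using comm2 by simp
  also have "\<dots> = (a \<cdot>\<^sub>m 1\<^sub>m n) * H + (Bs * Ea) * H"
    by (rule add_mult_distrib_mat[OF c1 mult_carrier_mat[OF Bs Ea] H])
  also have "(a \<cdot>\<^sub>m 1\<^sub>m n) * H = a \<cdot>\<^sub>m H" using H by (simp add: mult_smult_assoc_mat[OF one_carrier_mat H])
  also have "(Bs * Ea) * H = Bs * (Ea * H)" by (rule assoc_mult_mat[OF Bs Ea H])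
  finally have R: "mat_adjoint (a \<cdot>\<^sub>m 1\<^sub>m n + B * E) * H = a \<cdot>\<^sub>m H + Bs * (Ea * H)" .
  show ?case unfolding evalm_pCons[OF B] E_def[symmetric] L R ..
qed

lemma evalm_Omega:
  assumes B: "B \<in> Omega k"
  shows "(\<forall>i. cnj (coeff q i) = coeff q i) \<Longrightarrow> evalm B q \<in> Omega k"
proof (induction q rule: pCons_induct)
  case 0 then show ?case using Omega_carrier[OF B] Omega_zero by simp
next
  case (pCons a p)
  have ra: "cnj a = a" using pCons(3)[rule_format, of 0] by simp
  have rp: "\<forall>i. cnj (coeff p i) = coeff p i" using pCons(3) by (metis coeff_pCons_Suc)
  have "evalm B p \<in> Omega k" using pCons(2) rp by simp
  then show ?case unfolding evalm_pCons[OF Omega_carrier[OF B]]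
    using Omega_add Omega_smult[OF Omega_one ra] Omega_mult[OF B] by blast
qed

lemma char_poly_real:
  assumes B: "B \<in> carrier_mat N N" and H: "H \<in> carrier_mat N N" and inv: "invertible_mat H"
    and HB: "H * B = mat_adjoint B * H"
  shows "cp (char_poly B) = char_poly B"
proof -
  have adjT: "mat_adjoint B = transpose_mat (map_mat cnj B)"
    by (rule eq_matI) auto
  have mc: "map_mat cnj B \<in> carrier_mat N N" using B by simp
  have "char_poly (mat_adjoint B) = char_poly (map_mat cnj B)"
    unfolding adjT by (rule char_poly_transpose_mat[OF mc])
  also have "\<dots> = cp (char_poly B)" by (rule cnj_hom.char_poly_hom[OF B])
  finally have e1: "char_poly (mat_adjoint B) = cp (char_poly B)" .
  from inv obtain Hi where hi1: "H * Hi = 1\<^sub>m (dim_row H)" and hi2: "Hi * H = 1\<^sub>m (dim_row Hi)"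
    unfolding invertible_mat_def inverts_mat_def by blast
  have dH: "dim_row H = N" "dim_col H = N" using H by auto
  have Hi: "Hi \<in> carrier_mat N N"
    using hi1 hi2 dH by (metis carrier_matI index_mult_mat(2) index_mult_mat(3) index_one_mat(2) index_one_mat(3))
  have hi1': "H * Hi = 1\<^sub>m N" and hi2': "Hi * H = 1\<^sub>m N" using hi1 hi2 dH Hi by auto
  have Bs: "mat_adjoint B \<in> carrier_mat N N" using B by simp
  have "H * B * Hi = mat_adjoint B * H * Hi" using HB by simp
  also have "\<dots> = mat_adjoint B * (H * Hi)" by (rule assoc_mult_mat[OF Bs H Hi])
  also have "\<dots> = mat_adjoint B" using hi1' right_mult_one_mat[OF Bs] by simp
  finally have eq: "mat_adjoint B = H * B * Hi" by simp
  have "similar_mat_wit (mat_adjoint B) B H Hi"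
    unfolding similar_mat_wit_def Let_def using Bs B H Hi hi1' hi2' eq by auto
  then have "similar_mat (mat_adjoint B) B" unfolding similar_mat_def by blast
  then have "char_poly (mat_adjoint B) = char_poly B" by (rule char_poly_similar)
  with e1 show ?thesis by simp
qed

lemma poly_linprod: fixes x :: complex shows "poly (\<Prod>a\<leftarrow>es. [:-a, 1:]) x = (\<Prod>a\<leftarrow>es. x - a)"
proof (induction es)
  case (Cons a es)
  have "poly (\<Prod>a\<leftarrow>a # es. [:-a, 1:]) x = (x - a) * poly (\<Prod>a\<leftarrow>es. [:-a, 1:]) x" by (simp add: left_diff_distrib)
  then show ?case using Cons by simp
qed simp

theorem mainTheorem7:
  fixes m n :: nat and H B :: "complex mat"
  assumes "m \<ge> 1"
    and "H \<in> Omega (2*n)" and "invertible_mat H" and "hermitian_mat H"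
    and "B \<in> Omega (2*n)" and "H_selfadjoint H B"
    and "spectrum B \<inter> \<real> = {}"
  shows "\<exists>A \<in> Omega (2*n). H_selfadjoint H A \<and> A ^\<^sub>m m = B"
proof -
  define k where "k = 2*n"
  define N where "N = 2*k"
  have m: "m \<ge> 1" by fact
  have BO: "B \<in> Omega k" and HO: "H \<in> Omega k" using assms unfolding k_def by auto
  have cB: "B \<in> carrier_mat N N" and cH: "H \<in> carrier_mat N N"
    using Omega_carrier[OF BO] Omega_carrier[OF HO] unfolding N_def by auto
  have HB: "H * B = mat_adjoint B * H" using assms(6) unfolding H_selfadjoint_def .
  obtain es where es: "char_poly B = (\<Prod>a\<leftarrow>es. [:-a, 1:])" and les: "length es = N"
    using char_poly_factorized[OF cB] by blast
  define S where "S = spectrum B"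
  have S: "S = set es"
    unfolding S_def spectrum_root_char_poly[OF cB] es poly_linprod
    by (auto simp: prod_list_zero_iff)
  have fin: "finite S" unfolding S by simp
  have nr: "\<forall>s\<in>S. Im s \<noteq> 0" using assms(7) unfolding S_def by (auto simp: complex_is_Real_iff)
  have cpc: "cp (char_poly B) = char_poly B" by (rule char_poly_real[OF cB cH assms(3) HB])
  have Sc: "cnj s \<in> S" if "s \<in> S" for s
  proof -
    have "poly (char_poly B) s = 0" using that unfolding S_def spectrum_root_char_poly[OF cB] by simp
    then have "poly (cp (char_poly B)) (cnj s) = 0" by (simp add: poly_map_poly_cnj)
    then show ?thesis unfolding cpc S_def spectrum_root_char_poly[OF cB] by simp
  qed
  have cS: "cnj ` S = S"
  proof
    show "cnj ` S \<subseteq> S" using Sc by auto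
    show "S \<subseteq> cnj ` S"
    proof
      fix s assume "s \<in> S"
      then have "cnj s \<in> S" by (rule Sc)
      then show "s \<in> cnj ` S" by (metis complex_cnj_cnj image_eqI)
    qed
  qed
  define P where "P = (\<Prod>s\<in>S. [:-s, 1:])"
  obtain q where cpq: "cp q = q" and qdv: "P^(Suc N) dvd q^m - [:0,1:]"
    using poly_part[OF fin cS nr m, of "Suc N"] unfolding P_def by auto
  define g where "g = (\<Prod>a\<leftarrow>es. [:-a, 1:])"
  have "g dvd P^N" unfolding g_def P_def using list_prod_dvd_pow[OF fin, of es] S les by simp
  also have "P^N dvd P^(Suc N)" by (simp add: le_imp_power_dvd)
  also note qdv
  finally obtain h where gh: "q^m - [:0,1:] = g * h" by (elim dvdE)
  then have qm: "q^m = [:0,1:] + g * h" by (simp add: algebra_simps)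
  obtain T Pm Qm where sd: "schur_decomposition B es = (T, Pm, Qm)" by (cases "schur_decomposition B es") auto
  from schur_decomposition[OF cB es sd] have sim: "similar_mat_wit B T Pm Qm"
    and ut: "upper_triangular T" and dg: "diag_mat T = es" by auto
  note sw = similar_mat_witD2[OF cB sim]
  have "evalm B g = evalm (Pm * T * Qm) g" using sw(3) by simp
  also have "\<dots> = Pm * evalm T g * Qm" by (rule evalm_sim[OF sw(5) sw(6) sw(7) sw(1) sw(2)])
  also have "evalm T g = 0\<^sub>m N N" unfolding g_def by (rule tri_kill[OF sw(5) ut dg])
  finally have g0: "evalm B g = 0\<^sub>m N N" using sw(6) sw(7) by simp
  define A where "A = evalm B q"
  have "A ^\<^sub>m m = evalm B (q^m)" unfolding A_def by (simp add: evalm_power[OF cB])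
  also have "\<dots> = B" unfolding qm evalm_add[OF cB] evalm_mult[OF cB] evalm_X[OF cB] g0
    using cB by simp
  finally have Am: "A ^\<^sub>m m = B" .
  have rq: "\<forall>i. cnj (coeff q i) = coeff q i"
  proof
    fix i
    have "coeff (cp q) i = cnj (coeff q i)" by (simp add: coeff_map_poly)
    then show "cnj (coeff q i) = coeff q i" using cpq by simp
  qed
  have AO: "A \<in> Omega k" unfolding A_def using evalm_Omega[OF BO] rq by blast
  have AH: "H_selfadjoint H A" unfolding H_selfadjoint_def A_def
    using evalm_selfadj[OF cB cH HB] rq by blast
  show ?thesis using AO AH Am unfolding k_def by blast
qed

end
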